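(* Let $\Delta=(\alpha_1,\dots,\alpha_N)$ be ordered and let $B$ be the associated set of bases (defined below). For $b=(\beta_1,\dots,\beta_r)\in B$, listed in increasing order of indices, consider the linear form $$\phi^b:=Res_{\beta_1}\circ Res_{\beta_2}\circ\cdots\circ Res_{\beta_r}:S_\Delta\to k,$$ where $Res_{\beta_r}$ is applied first and each subsequent $\beta_i$ denotes its image in the successive quotient space. Then $(\phi^b)_{b\in B}$ is the dual basis of $(\phi_b)_{b\in B}$: for all $b,b'\in B$, $$\phi^b(\phi_{b'})=1\ \text{if } b=b',\qquad \phi^b(\phi_{b'})=0\ \text{otherwise}.$$
   Context: Let $k$ be a field of characteristic zero. For a finite-dimensional $k$-vector space $W$ of dimension $d$ and a finite set $\Lambda\subset W$ of nonzero vectors spanning $W$, let $S_\Lambda$ be the $k$-span of the rational functions $\phi_\sigma=1/\prod_{\alpha\in\sigma}\alpha$ on $W^*$, for $\sigma\subset\Lambda$ a basis of $W$. For $W=0$, $\Lambda=\emptyset$, we have $S_\emptyset=k$. For $\alpha\in\Lambda$, let $\Lambda/\alpha$ be the image of $\Lambda\setminus k\alpha$ in $W/k\alpha$; it spans $W/k\alpha$. Every $\phi\in S_\Lambda$ has at most a simple pole along the hyperplane $\{\alpha=0\}\subset W^*$, which is identified with $(W/k\alpha)^*$. Define $Res_\alpha:S_\Lambda\to S_{\Lambda/\alpha}$ by $Res_\alpha(\phi)=(\alpha\phi)|_{\{\alpha=0\}}$. Now let $V$ be a $k$-vector space of dimension $r$ and $\Delta=(\alpha_1,\dots,\alpha_N)$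 an ordered finite set of nonzero vectors spanning $V$. $B$ is the set of ordered bases $b=(\alpha_{i_1},\dots,\alpha_{i_r})$, $i_1<\dots<i_r$, of $V$ with elements in $\Delta$, such that for every $j\notin\{i_1,\dots,i_r\}$ the set $\{\alpha_j\}\cup\{\alpha_{i_p}:i_p>j\}$ is linearly independent. It is known that $(\phi_b)_{b\in B}$ is a basis of $S_\Delta$. For $b=(\beta_1,\dots,\beta_r)$, the composite $Res_{\beta_1}\circ\cdots\circ Res_{\beta_r}$ means: first $Res_{\beta_r}:S_\Delta\to S_{\Delta/\beta_r}$, then $Res$ along the image of $\beta_{r-1}$ in $V/k\beta_r$, and so on, ending in $S_\emptyset=k$. *)

theory Defs
  imports "HOL-Analysis.Analysis" "HOL-Computational_Algebra.Polynomial"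
begin

text \<open>Model: V = k^n (coefficient vectors), V* = k^n (points), with the pairing
  below; a vector alpha of V is the linear form x |-> pair alpha x on V*.\<close>

definition pair :: "'k::field ^ 'n \<Rightarrow> 'k ^ 'n \<Rightarrow> 'k" where
  "pair a x = (\<Sum>i\<in>UNIV. a $ i * x $ i)"

definition phi_idx :: "('k::field ^ 'n) list \<Rightarrow> nat set \<Rightarrow> ('k ^ 'n \<Rightarrow> 'k)" where
  "phi_idx D I = (\<lambda>x. 1 / (\<Prod>i\<in>I. pair (D ! i) x))"

definition regval :: "('k::field_char_0 \<Rightarrow> 'k) \<Rightarrow> 'k" where
  "regval g = (THE c. \<exists>p q. poly q 0 \<noteq> 0 \<and> c = poly p 0 / poly q 0 \<and>
                        finite {t. g t \<noteq> poly p t / poly q t})"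

text \<open>Residue along beta of a function living on the subspace U = {x. pair gamma x = 0 for
  all gamma in Z} of V* (which is the dual of V modulo the span of Z).  The result lives on
  U \<inter> {beta = 0}: its value at such x is the value at the hyperplane of (beta * psi),
  computed along the line x + t v, where v \<in> U with beta(v) = 1.\<close>
definition Res :: "('k::field_char_0 ^ 'n) list \<Rightarrow> 'k ^ 'n \<Rightarrow> ('k ^ 'n \<Rightarrow> 'k) \<Rightarrow> ('k ^ 'n \<Rightarrow> 'k)" where
  "Res Z \<beta> \<psi> = (let v = (SOME v. (\<forall>\<gamma>\<in>set Z. pair \<gamma> v = 0) \<and> pair \<beta> v = 1)
                 in (\<lambda>x. regval (\<lambda>t. pair \<beta> (x + t *s v) * \<psi> (x + t *s v))))"

text \<open>iter_res [beta_r, ..., beta_1] [] psi = Res_{beta_1} o ... o Res_{beta_r} psi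
  (Res_{beta_r} applied first), as a function on the final subspace.\<close>
fun iter_res :: "('k::field_char_0 ^ 'n) list \<Rightarrow> ('k ^ 'n) list \<Rightarrow> ('k ^ 'n \<Rightarrow> 'k) \<Rightarrow> ('k ^ 'n \<Rightarrow> 'k)" where
  "iter_res [] Z \<psi> = \<psi>"
| "iter_res (\<beta> # bs) Z \<psi> = iter_res bs (\<beta> # Z) (Res Z \<beta> \<psi>)"

text \<open>phi^b for b given by its index set I (listed in increasing order of indices);
  the final subspace is {0} = (V/V)* so evaluating at 0 is the identification S_empty = k.\<close>
definition res_form :: "('k::field_char_0 ^ 'n) list \<Rightarrow> nat set \<Rightarrow> ('k ^ 'n \<Rightarrow> 'k) \<Rightarrow> 'k" where
  "res_form D I \<psi> = iter_res (rev (map ((!) D) (sorted_list_of_set I))) [] \<psi> 0"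

definition basesB :: "('k::field ^ 'n) list \<Rightarrow> nat set set" where
  "basesB D = {I. I \<subseteq> {..<length D} \<and>
      vec.independent ((!) D ` I) \<and> vec.span ((!) D ` I) = UNIV \<and>
      (\<forall>j<length D. j \<notin> I \<longrightarrow>
          vec.independent (insert (D ! j) ((!) D ` {i\<in>I. j < i})))}"

end

theory Submission
  imports Defs
begin


lemma pair_add_r: "pair a (x + y) = pair a x + pair a (y::'k::field^'n)"
  by (simp add: pair_def distrib_left sum.distrib)
lemma pair_scale_r: "pair a (t *s x) = t * pair a (x::'k::field^'n)"
  by (simp add: pair_def sum_distrib_left mult_ac)
lemma pair_zero_r[simp]: "pair a (0::'k::field^'n) = 0"
  by (simp add: pair_def)
lemma pair_add_l: "pair (a + b) x = pair a x + pair b (x::'k::field^'n)"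
  by (simp add: pair_def distrib_right sum.distrib)
lemma pair_scale_l: "pair (t *s a) x = t * pair a (x::'k::field^'n)"
  by (simp add: pair_def sum_distrib_left mult_ac)
lemma pair_zero_l[simp]: "pair 0 (x::'k::field^'n) = 0"
  by (simp add: pair_def)
lemma pair_diff_l: "pair (a - b) x = pair a x - pair b (x::'k::field^'n)"
  by (simp add: pair_def left_diff_distrib sum_subtractf)

lemma pair_span_zero:
  fixes x :: "'k::field^'n"
  assumes "a \<in> vec.span S" "\<forall>s\<in>S. pair s x = 0"
  shows "pair a x = 0"
proof -
  have "vec.subspace {a. pair a x = 0}"
    unfolding vec.subspace_def by (simp add: pair_add_l pair_scale_l)
  moreover have "S \<subseteq> {a. pair a x = 0}" using assms(2) by auto
  ultimately have "vec.span S \<subseteq> {a. pair a x = 0}"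
    using vec.span_minimal by blast
  then show ?thesis using assms(1) by auto
qed

lemma rat_unique:
  fixes p q p' q' :: "'k::field_char_0 poly"
  assumes "poly q 0 \<noteq> 0" "poly q' 0 \<noteq> 0"
    and "finite {t. g t \<noteq> poly p t / poly q t}" "finite {t. g t \<noteq> poly p' t / poly q' t}"
  shows "poly p 0 / poly q 0 = poly p' 0 / poly q' 0"
proof -
  have q0: "q \<noteq> 0" "q' \<noteq> 0" using assms(1,2) by auto
  let ?h = "p * q' - p' * q"
  let ?B = "{t. g t \<noteq> poly p t / poly q t} \<union> {t. g t \<noteq> poly p' t / poly q' t}
     \<union> {t. poly q t = 0} \<union> {t. poly q' t = 0}"
  have "finite {t. poly q t = 0}" using poly_roots_finite q0(1) by blast
  moreover have "finite {t. poly q' t = 0}" using poly_roots_finite q0(2) by blast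
  ultimately have fB: "finite ?B" using assms(3,4) by simp
  have inf: "infinite (UNIV - ?B)"
    using fB infinite_UNIV_char_0 by (rule Diff_infinite_finite)
  have sub: "UNIV - ?B \<subseteq> {t. poly ?h t = 0}"
  proof
    fix t assume "t \<in> UNIV - ?B"
    then have "poly p t / poly q t = poly p' t / poly q' t" "poly q t \<noteq> 0" "poly q' t \<noteq> 0"
      by auto
    then have "poly p t * poly q' t = poly p' t * poly q t"
      using frac_eq_eq[of "poly q t" "poly q' t" "poly p t" "poly p' t"] by blast
    then show "t \<in> {t. poly ?h t = 0}" by (simp only: mem_Collect_eq poly_diff poly_mult) simp
  qed
  have infh: "infinite {t. poly ?h t = 0}" by (rule infinite_super[OF sub inf])
  have "?h = 0"
  proof (rule ccontr)
    assume "?h \<noteq> 0"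
    then have "finite {t. poly ?h t = 0}" by (rule poly_roots_finite)
    then show False using infh by contradiction
  qed
  then have "poly ?h 0 = 0" by simp
  then have "poly p 0 * poly q' 0 = poly p' 0 * poly q 0"
    by (simp only: poly_diff poly_mult) simp
  then show ?thesis using frac_eq_eq[of "poly q 0" "poly q' 0" "poly p 0" "poly p' 0"] assms(1,2) by blast
qed


lemma regval_eq:
  fixes p q :: "'k::field_char_0 poly"
  assumes "poly q 0 \<noteq> 0" "finite {t. g t \<noteq> poly p t / poly q t}"
  shows "regval g = poly p 0 / poly q 0"
  unfolding regval_def
proof (rule the_equality)
  show "\<exists>p' q'. poly q' 0 \<noteq> 0 \<and> poly p 0 / poly q 0 = poly p' 0 / poly q' 0 \<and>
      finite {t. g t \<noteq> poly p' t / poly q' t}" using assms by (intro exI[of _ p] exI[of _ q]) simp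
next
  fix c assume "\<exists>p' q'. poly q' 0 \<noteq> 0 \<and> c = poly p' 0 / poly q' 0 \<and>
      finite {t. g t \<noteq> poly p' t / poly q' t}"
  then obtain p' q' where h: "poly q' 0 \<noteq> 0" "c = poly p' 0 / poly q' 0"
      "finite {t. g t \<noteq> poly p' t / poly q' t}" by blast
  show "c = poly p 0 / poly q 0" using rat_unique[of q q' g p p'] assms h by simp
qed

lemma regval_cofinite:
  fixes p q :: "'k::field_char_0 poly"
  assumes "poly q 0 \<noteq> 0" "finite E" "\<And>t. t \<notin> E \<Longrightarrow> g t = poly p t / poly q t"
  shows "regval g = poly p 0 / poly q 0"
proof (rule regval_eq[OF assms(1)])
  show "finite {t. g t \<noteq> poly p t / poly q t}"
    by (rule finite_subset[OF _ assms(2)]) (use assms(3) in blast)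
qed


lemma dual_exists:
  fixes B :: "('k::field^'n) set"
  assumes "vec.independent B" "vec.span B = UNIV" "\<beta> \<in> B"
  shows "\<exists>v. \<forall>b\<in>B. pair b v = (if b = \<beta> then 1 else 0)"
proof -
  have fin: "finite B" using assms(1) vec.finiteI_independent by blast
  have "vec.dim B = card B" using assms(1) vec.dim_eq_card_independent by blast
  moreover have "vec.dim (vec.span B) = vec.dim B" by (rule vec.dim_span)
  ultimately have "card B = vec.dim (UNIV :: ('k^'n) set)" using assms(2) by simp
  then have cB: "card (UNIV::'n set) = card B" using vec_dim_card[where 'a='k and 'n='n] by metis
  obtain f :: "'n \<Rightarrow> 'k^'n" where f: "bij_betw f UNIV B"
    using finite_same_card_bij[of "UNIV::'n set" B] fin cB by auto
  define A :: "'k^'n^'n" where "A = (\<chi> i. f i)"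
  have rA: "row i A = f i" for i unfolding row_def A_def by simp
  have "rows A = B" using f unfolding rows_def rA bij_betw_def by auto
  then have "\<exists>C. C ** A = mat 1" using assms(2) matrix_left_invertible_span_rows_gen by blast
  then have "\<exists>C. A ** C = mat 1" using matrix_left_right_inverse by blast
  then have "surj (\<lambda>x. A *v x)" using matrix_right_invertible_surjective by blast
  then have "\<exists>v. (\<chi> i. if f i = \<beta> then 1 else (0::'k)) = A *v v"
    unfolding surj_def by (rule allE)
  then obtain v where v: "A *v v = (\<chi> i. if f i = \<beta> then 1 else 0)" 
    by metis
  have "pair b v = (if b = \<beta> then 1 else 0)" if hb: "b \<in> B" for b
  proof -
    obtain i where i: "f i = b" using f hb unfolding bij_betw_def by auto
    have "(A *v v) $ i = pair (f i) v"
      unfolding matrix_vector_mult_def pair_def A_def by simp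
    then show ?thesis using v i by simp
  qed
  then show ?thesis by blast
qed



definition KS :: "('k::field^'n) set \<Rightarrow> ('k^'n) list \<Rightarrow> ('k^'n) set" where
  "KS JS Z = JS - vec.span (set Z)"

definition shape :: "('k::field^'n) set \<Rightarrow> ('k^'n) list \<Rightarrow> ('k^'n \<Rightarrow> 'k) \<Rightarrow> 'k \<Rightarrow> bool" where
  "shape JS Z \<psi> c = (\<forall>x. (\<forall>z\<in>set Z. pair z x = 0) \<longrightarrow> (\<forall>k\<in>KS JS Z. pair k x \<noteq> 0) \<longrightarrow>
      \<psi> x = c / (\<Prod>k\<in>KS JS Z. pair k x))"

definition invar :: "('k::field^'n) set \<Rightarrow> ('k^'n) list \<Rightarrow> 'k \<Rightarrow> bool" where
  "invar JS Z c = (c \<noteq> 0 \<longrightarrow> vec.independent (KS JS Z \<union> set Z))"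

lemma finite_lin_roots:
  fixes a b :: "'k::field"
  assumes "a \<noteq> 0 \<or> b \<noteq> 0"
  shows "finite {t. a + t * b = 0}"
proof (cases "b = 0")
  case True
  then have "{t. a + t * b = 0} = {}" using assms by auto
  then show ?thesis by simp
next
  case False
  have "t = - a / b" if "a + t * b = 0" for t
  proof -
    have "t * b = - a" using that by (simp add: add_eq_0_iff)
    moreover have "t = (t * b) / b" using False by simp
    ultimately show ?thesis by simp
  qed
  then have "{t. a + t * b = 0} \<subseteq> {- a / b}" by blast
  then show ?thesis by (rule finite_subset) simp
qed

lemma coeff_in_span_insert:
  fixes k \<beta> v :: "'k::field^'n"
  assumes "k \<in> vec.span (insert \<beta> (set Z))" "k \<notin> vec.span (set Z)"
    "\<forall>\<gamma>\<in>set Z. pair \<gamma> v = 0" "pair \<beta> v = 1"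
  shows "pair k v \<noteq> 0"
proof -
  obtain a where a: "k - a *s \<beta> \<in> vec.span (set Z)"
    using assms(1) vec.span_breakdown_eq by blast
  have "a \<noteq> 0" using a assms(2) by auto
  have "pair (k - a *s \<beta>) v = 0" using pair_span_zero[OF a] assms(3) by blast
  then have "pair k v = a" using assms(4) by (simp add: pair_diff_l pair_scale_l)
  then show ?thesis using \<open>a \<noteq> 0\<close> by simp
qed

lemma K0_unique:
  fixes ka kb \<beta> :: "'k::field^'n"
  assumes ind: "vec.independent S" and sub: "set Z \<subseteq> S" "ka \<in> S" "kb \<in> S"
    and ka: "ka \<in> vec.span (insert \<beta> (set Z))" "ka \<notin> vec.span (set Z)"
    and kb: "kb \<in> vec.span (insert \<beta> (set Z))" "kb \<notin> vec.span (set Z)"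
  shows "ka = kb"
proof (rule ccontr)
  assume ne: "ka \<noteq> kb"
  have b: "\<beta> \<in> vec.span (insert ka (set Z))" using vec.in_span_insert[OF ka] .
  have "insert \<beta> (set Z) \<subseteq> vec.span (insert ka (set Z))"
    using b vec.span_superset by blast
  then have "vec.span (insert \<beta> (set Z)) \<subseteq> vec.span (insert ka (set Z))"
    using vec.span_minimal[OF _ vec.subspace_span] by blast
  then have "kb \<in> vec.span (insert ka (set Z))" using kb(1) by blast
  moreover have "kb \<notin> set Z" using kb(2) vec.span_base by blast
  then have "insert ka (set Z) \<subseteq> S - {kb}" using sub ne by blast
  ultimately have "kb \<in> vec.span (S - {kb})" using vec.span_mono by blast
  then have "vec.dependent S" using sub(3) vec.dependent_def by blast
  then show False using ind by contradiction
qed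

lemma pair_line: "pair k (x + t *s v) = pair k x + t * pair k (v::'k::field^'n)"
  by (simp add: pair_add_r pair_scale_r)

lemma step:
  fixes JS :: "('k::field_char_0^'n) set"
  assumes fin: "finite JS" and nb: "\<beta> \<notin> vec.span (set Z)"
   and ex: "\<exists>v. (\<forall>\<gamma>\<in>set Z. pair \<gamma> v = 0) \<and> pair \<beta> v = 1"
   and sh: "shape JS Z \<psi> c" and iv: "invar JS Z c"
  shows "\<exists>c'. shape JS (\<beta>#Z) (Res Z \<beta> \<psi>) c' \<and> invar JS (\<beta>#Z) c' \<and> (c = 0 \<longrightarrow> c' = 0)
     \<and> ((\<not>(\<exists>k\<in>JS. k \<in> vec.span (insert \<beta> (set Z)) \<and> k \<notin> vec.span (set Z))) \<longrightarrow> c' = 0)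
     \<and> (\<beta> \<in> JS \<longrightarrow> c' = c)"
proof -
  define v where "v = (SOME v. (\<forall>\<gamma>\<in>set Z. pair \<gamma> v = 0) \<and> pair \<beta> v = 1)"
  have v: "\<forall>\<gamma>\<in>set Z. pair \<gamma> v = 0" "pair \<beta> v = 1"
    using someI_ex[OF ex] unfolding v_def by blast+
  have Res_eq: "Res Z \<beta> \<psi> x = regval (\<lambda>t. pair \<beta> (x + t *s v) * \<psi> (x + t *s v))" for x
    unfolding Res_def v_def Let_def by simp
  define K where "K = KS JS Z"
  define K0 where "K0 = {k\<in>K. k \<in> vec.span (insert \<beta> (set Z))}"
  have spm: "vec.span (set Z) \<subseteq> vec.span (insert \<beta> (set Z))" by (rule vec.span_mono) blast
  have K': "KS JS (\<beta>#Z) = K - K0" unfolding KS_def K_def K0_def using spm by auto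
  have finK: "finite K" using fin unfolding K_def KS_def by simp
  have K0_zero: "pair k x = 0" if "k \<in> K0" "\<forall>z\<in>set (\<beta>#Z). pair z x = 0" for k x
    using that pair_span_zero[of k "insert \<beta> (set Z)" x] unfolding K0_def by simp
  have K0_v: "pair k v \<noteq> 0" if "k \<in> K0" for k
    using coeff_in_span_insert[of k \<beta> Z v] that v unfolding K0_def K_def KS_def by auto
  have betaK0: "\<beta> \<in> K0" if "\<beta> \<in> JS"
    using that nb vec.span_base[of \<beta> "insert \<beta> (set Z)"] unfolding K0_def K_def KS_def by auto
  have line: "finite {t. \<exists>k\<in>K. pair k x + t * pair k v = 0} \<and>
     (\<forall>t. t \<notin> {t. \<exists>k\<in>K. pair k x + t * pair k v = 0} \<longrightarrow>
        pair \<beta> (x + t *s v) * \<psi> (x + t *s v) = t * (c / (\<Prod>k\<in>K. pair k x + t * pair k v)))"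
    if gx: "\<forall>z\<in>set (\<beta>#Z). pair z x = 0" "\<forall>k\<in>K - K0. pair k x \<noteq> 0" for x
  proof
    have "{t. \<exists>k\<in>K. pair k x + t * pair k v = 0} = (\<Union>k\<in>K. {t. pair k x + t * pair k v = 0})"
      by blast
    moreover have "finite {t. pair k x + t * pair k v = 0}" if "k \<in> K" for k
    proof (rule finite_lin_roots)
      show "pair k x \<noteq> 0 \<or> pair k v \<noteq> 0"
      proof (cases "k \<in> K0")
        case True then show ?thesis using K0_v by blast
      next
        case False then show ?thesis using gx(2) that by blast
      qed
    qed
    ultimately show "finite {t. \<exists>k\<in>K. pair k x + t * pair k v = 0}" using finK by simp
  next
    show "\<forall>t. t \<notin> {t. \<exists>k\<in>K. pair k x + t * pair k v = 0} \<longrightarrow>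
        pair \<beta> (x + t *s v) * \<psi> (x + t *s v) = t * (c / (\<Prod>k\<in>K. pair k x + t * pair k v))"
    proof (intro allI impI)
      fix t assume t: "t \<notin> {t. \<exists>k\<in>K. pair k x + t * pair k v = 0}"
      have z: "\<forall>z\<in>set Z. pair z (x + t *s v) = 0" using gx(1) v(1) by (simp add: pair_line)
      have k: "\<forall>k\<in>KS JS Z. pair k (x + t *s v) \<noteq> 0" using t unfolding K_def by (simp add: pair_line)
      have "\<psi> (x + t *s v) = c / (\<Prod>k\<in>KS JS Z. pair k (x + t *s v))"
        using sh z k unfolding shape_def by blast
      moreover have "pair \<beta> (x + t *s v) = t" using gx(1) v(2) by (simp add: pair_line)
      ultimately show "pair \<beta> (x + t *s v) * \<psi> (x + t *s v) = t * (c / (\<Prod>k\<in>K. pair k x + t * pair k v))"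
        unfolding K_def by (simp add: pair_line)
    qed
  qed
  have z0: "(\<forall>z\<in>set (\<beta>#Z). pair z x = 0) = (\<forall>z\<in>set (\<beta>#Z). pair z x = 0)" for x by simp
  show ?thesis
  proof (cases "c = 0 \<or> K0 = {}")
    case True
    have sh': "shape JS (\<beta>#Z) (Res Z \<beta> \<psi>) 0"
      unfolding shape_def K'
    proof (intro allI impI)
      fix x assume gx: "\<forall>z\<in>set (\<beta>#Z). pair z x = 0" "\<forall>k\<in>K - K0. pair k x \<noteq> 0"
      note L = line[OF gx]
      show "Res Z \<beta> \<psi> x = 0 / (\<Prod>k\<in>K - K0. pair k x)"
      proof (cases "c = 0")
        case True
        have "regval (\<lambda>t. pair \<beta> (x + t *s v) * \<psi> (x + t *s v)) = poly 0 0 / poly 1 0"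
          by (rule regval_cofinite[OF _ conjunct1[OF L]]) (use L True in auto)
        then show ?thesis by (simp add: Res_eq)
      next
        case False
        then have K00: "K0 = {}" using \<open>c = 0 \<or> K0 = {}\<close> by blast
        define q where "q = (\<Prod>k\<in>K. [:pair k x, pair k v:])"
        have pq: "poly q t = (\<Prod>k\<in>K. pair k x + t * pair k v)" for t
          unfolding q_def by (simp add: poly_prod)
        have q0: "poly q 0 \<noteq> 0" unfolding pq using gx(2) K00 finK by simp
        have "regval (\<lambda>t. pair \<beta> (x + t *s v) * \<psi> (x + t *s v)) = poly [:0, c:] 0 / poly q 0"
        proof (rule regval_cofinite[OF q0 conjunct1[OF L]])
          fix t assume "t \<notin> {t. \<exists>k\<in>K. pair k x + t * pair k v = 0}"
          then show "pair \<beta> (x + t *s v) * \<psi> (x + t *s v) = poly [:0, c:] t / poly q t"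
            using L unfolding pq by (simp add: mult.commute)
        qed
        then show ?thesis by (simp add: Res_eq)
      qed
    qed
    have iv': "invar JS (\<beta>#Z) 0" unfolding invar_def by simp
    have "\<beta> \<in> JS \<longrightarrow> 0 = c" using True betaK0 by auto
    moreover have "c = 0 \<longrightarrow> (0::'k) = 0" by simp
    ultimately show ?thesis using sh' iv' True by (intro exI[of _ 0]) auto
  next
    case False
    then have c0: "c \<noteq> 0" and "K0 \<noteq> {}" by auto
    then obtain k0 where k0: "k0 \<in> K0" by blast
    have indS: "vec.independent (K \<union> set Z)" using iv c0 unfolding invar_def K_def by simp
    have k0K: "k0 \<in> K" and k0b: "k0 \<in> vec.span (insert \<beta> (set Z))" using k0 unfolding K0_def by auto
    have k0nZ: "k0 \<notin> vec.span (set Z)" using k0K unfolding K_def KS_def by simp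
    have K0eq: "K0 = {k0}"
    proof
      show "K0 \<subseteq> {k0}"
      proof
        fix k assume "k \<in> K0"
        then have kK: "k \<in> K" and kb: "k \<in> vec.span (insert \<beta> (set Z))" unfolding K0_def by auto
        have knZ: "k \<notin> vec.span (set Z)" using kK unfolding K_def KS_def by simp
        have "set Z \<subseteq> K \<union> set Z" "k \<in> K \<union> set Z" "k0 \<in> K \<union> set Z" using kK k0K by auto
        then have "k = k0" using K0_unique[OF indS _ _ _ kb knZ k0b k0nZ] by simp
        then show "k \<in> {k0}" by simp
      qed
    qed (use k0 in simp)
    define c' where "c' = c / pair k0 v"
    have sh': "shape JS (\<beta>#Z) (Res Z \<beta> \<psi>) c'"
      unfolding shape_def K'
    proof (intro allI impI)
      fix x assume gx: "\<forall>z\<in>set (\<beta>#Z). pair z x = 0" "\<forall>k\<in>K - K0. pair k x \<noteq> 0"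
      note L = line[OF gx]
      define q where "q = (\<Prod>k\<in>K - K0. [:pair k x, pair k v:])"
      have pq: "poly q t = (\<Prod>k\<in>K - K0. pair k x + t * pair k v)" for t
        unfolding q_def by (simp add: poly_prod)
      have q0: "poly q 0 \<noteq> 0" unfolding pq using gx(2) finK by simp
      have kx: "pair k0 x = 0" using K0_zero[OF k0 gx(1)] .
      have kv: "pair k0 v \<noteq> 0" using K0_v[OF k0] .
      have k0K: "k0 \<in> K" using k0 unfolding K0_def by blast
      have "regval (\<lambda>t. pair \<beta> (x + t *s v) * \<psi> (x + t *s v)) = poly [:c':] 0 / poly q 0"
      proof (rule regval_cofinite[OF q0 finite_insert[THEN iffD2, OF conjunct1[OF L], of 0]])
        fix t assume t: "t \<notin> insert 0 {t. \<exists>k\<in>K. pair k x + t * pair k v = 0}"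
        then have t0: "t \<noteq> 0" by blast
        have "(\<Prod>k\<in>K. pair k x + t * pair k v) = (pair k0 x + t * pair k0 v) * (\<Prod>k\<in>K - {k0}. pair k x + t * pair k v)"
          using finK k0K by (simp add: prod.remove)
        also have "\<dots> = t * (pair k0 v * poly q t)" using kx unfolding pq K0eq by simp
        finally have P: "(\<Prod>k\<in>K. pair k x + t * pair k v) = t * (pair k0 v * poly q t)" .
        have "pair \<beta> (x + t *s v) * \<psi> (x + t *s v) = t * (c / (\<Prod>k\<in>K. pair k x + t * pair k v))"
          using conjunct2[OF L] t by blast
        also have "\<dots> = t * (c / (t * (pair k0 v * poly q t)))" unfolding P ..
        also have "\<dots> = c / (pair k0 v * poly q t)" using t0 by simp
        also have "\<dots> = poly [:c':] t / poly q t" unfolding c'_def by simp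
        finally show "pair \<beta> (x + t *s v) * \<psi> (x + t *s v) = poly [:c':] t / poly q t" .
      qed
      then show "Res Z \<beta> \<psi> x = c' / (\<Prod>k\<in>K - K0. pair k x)" by (simp add: Res_eq pq)
    qed
    have iv': "invar JS (\<beta>#Z) c'"
    proof -
      define T where "T = (K - {k0}) \<union> set Z"
      have TS: "T \<subseteq> K \<union> set Z" unfolding T_def by blast
      have indT: "vec.independent T" using vec.independent_mono[OF indS TS] .
      have k0Z: "k0 \<notin> set Z" using k0nZ vec.span_base by meson
      have k0T: "k0 \<notin> T" using k0Z unfolding T_def by simp
      have ZT: "set Z \<subseteq> T" unfolding T_def by blast
      have ZsT: "set Z \<subseteq> vec.span T" using ZT vec.span_superset[of T] by (rule order_trans)
      have "\<beta> \<notin> vec.span T"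
      proof
        assume bT: "\<beta> \<in> vec.span T"
        have "insert \<beta> (set Z) \<subseteq> vec.span T" using bT ZsT by simp
        then have "vec.span (insert \<beta> (set Z)) \<subseteq> vec.span T"
          by (rule vec.span_minimal[OF _ vec.subspace_span])
        then have k0T': "k0 \<in> vec.span T" using k0b by (rule subsetD)
        have "T \<subseteq> (K \<union> set Z) - {k0}" using k0T TS by blast
        then have "vec.span T \<subseteq> vec.span ((K \<union> set Z) - {k0})" by (rule vec.span_mono)
        then have "k0 \<in> vec.span ((K \<union> set Z) - {k0})" using k0T' by (rule subsetD)
        moreover have "k0 \<in> K \<union> set Z" using k0K by simp
        ultimately have "vec.dependent (K \<union> set Z)" unfolding vec.dependent_def by (rule bexI)
        then show False using indS by contradiction
      qed
      then have "vec.independent (insert \<beta> T)" by (rule vec.independent_insertI[OF _ indT])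
      moreover have "KS JS (\<beta>#Z) \<union> set (\<beta>#Z) = insert \<beta> T" unfolding K' K0eq T_def by auto
      ultimately show ?thesis unfolding invar_def by simp
    qed
    have "\<beta> \<in> JS \<longrightarrow> c' = c"
    proof
      assume "\<beta> \<in> JS"
      then have "\<beta> \<in> K0" by (rule betaK0)
      then have "k0 = \<beta>" using K0eq by simp
      then show "c' = c" unfolding c'_def using v(2) by simp
    qed
    moreover have "\<exists>k\<in>JS. k \<in> vec.span (insert \<beta> (set Z)) \<and> k \<notin> vec.span (set Z)"
      using k0K k0b k0nZ unfolding K_def KS_def by auto
    ultimately show ?thesis using sh' iv' c0 by (intro exI[of _ c']) auto
  qed
qed

lemma main_ind:
  fixes JS :: "('k::field_char_0^'n) set"
  assumes fin: "finite JS"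
  shows "\<And>Z \<psi> c. distinct (bs @ Z) \<Longrightarrow> vec.independent (set (bs @ Z)) \<Longrightarrow>
    vec.span (set (bs @ Z)) = UNIV \<Longrightarrow> shape JS Z \<psi> c \<Longrightarrow> invar JS Z c \<Longrightarrow>
    ((c = 0 \<or> (\<exists>i<length bs. \<not>(\<exists>k\<in>JS. k \<in> vec.span (set (take (Suc i) bs) \<union> set Z) \<and>
         k \<notin> vec.span (set (take i bs) \<union> set Z)))) \<longrightarrow> iter_res bs Z \<psi> 0 = 0)
    \<and> (JS = set bs \<union> set Z \<longrightarrow> iter_res bs Z \<psi> 0 = c)"
proof (induction bs)
  case Nil
  then have "KS JS Z = {}" unfolding KS_def by simp
  then have "\<psi> 0 = c" using Nil(4) unfolding shape_def by simp
  then show ?case by simp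
next
  case (Cons \<beta> bs)
  have bn: "\<beta> \<notin> set (bs @ Z)" using Cons.prems(1) by simp
  have "vec.independent (insert \<beta> (set (bs @ Z)))" using Cons.prems(2) by simp
  then have "\<beta> \<notin> vec.span (set (bs @ Z))" using bn vec.independent_insert[of \<beta> "set (bs @ Z)"] by presburger
  moreover have "vec.span (set Z) \<subseteq> vec.span (set (bs @ Z))" by (rule vec.span_mono) simp
  ultimately have nb: "\<beta> \<notin> vec.span (set Z)" by blast
  obtain v where v: "\<forall>b\<in>set ((\<beta>#bs) @ Z). pair b v = (if b = \<beta> then 1 else 0)"
    using dual_exists[OF Cons.prems(2) Cons.prems(3), of \<beta>] by auto
  have ex: "\<exists>v. (\<forall>\<gamma>\<in>set Z. pair \<gamma> v = 0) \<and> pair \<beta> v = 1"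
  proof (intro exI conjI)
    show "\<forall>\<gamma>\<in>set Z. pair \<gamma> v = 0" using v bn by auto
    show "pair \<beta> v = 1" using v by simp
  qed
  obtain c' where c': "shape JS (\<beta>#Z) (Res Z \<beta> \<psi>) c'" "invar JS (\<beta>#Z) c'" "c = 0 \<longrightarrow> c' = 0"
     "(\<not>(\<exists>k\<in>JS. k \<in> vec.span (insert \<beta> (set Z)) \<and> k \<notin> vec.span (set Z))) \<longrightarrow> c' = 0"
     "\<beta> \<in> JS \<longrightarrow> c' = c"
    using step[OF fin nb ex Cons.prems(4) Cons.prems(5)] by blast
  have d': "distinct (bs @ \<beta> # Z)" using Cons.prems(1) by auto
  have s': "set (bs @ \<beta> # Z) = set ((\<beta> # bs) @ Z)" by auto
  note IH = Cons.IH[OF d', unfolded s', OF Cons.prems(2) Cons.prems(3) c'(1) c'(2)]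
  have it: "iter_res (\<beta> # bs) Z \<psi> 0 = iter_res bs (\<beta> # Z) (Res Z \<beta> \<psi>) 0" by simp
  show ?case
  proof (intro conjI impI)
    assume H: "c = 0 \<or> (\<exists>i<length (\<beta> # bs). \<not>(\<exists>k\<in>JS. k \<in> vec.span (set (take (Suc i) (\<beta> # bs)) \<union> set Z) \<and>
         k \<notin> vec.span (set (take i (\<beta> # bs)) \<union> set Z)))"
    show "iter_res (\<beta> # bs) Z \<psi> 0 = 0"
    proof (cases "c = 0")
      case True
      then show ?thesis using IH c'(3) it by simp
    next
      case False
      then obtain i where i: "i < length (\<beta> # bs)" "\<not>(\<exists>k\<in>JS. k \<in> vec.span (set (take (Suc i) (\<beta> # bs)) \<union> set Z) \<and>
         k \<notin> vec.span (set (take i (\<beta> # bs)) \<union> set Z))" using H by blast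
      show ?thesis
      proof (cases i)
        case 0
        then have "c' = 0" using i(2) c'(4) by simp
        then show ?thesis using IH it by simp
      next
        case (Suc j)
        have e1: "set (take (Suc i) (\<beta> # bs)) \<union> set Z = set (take (Suc j) bs) \<union> set (\<beta> # Z)"
          using Suc by auto
        have e2: "set (take i (\<beta> # bs)) \<union> set Z = set (take j bs) \<union> set (\<beta> # Z)"
          using Suc by auto
        have "j < length bs" using i(1) Suc by simp
        then have "\<exists>i<length bs. \<not>(\<exists>k\<in>JS. k \<in> vec.span (set (take (Suc i) bs) \<union> set (\<beta> # Z)) \<and>
         k \<notin> vec.span (set (take i bs) \<union> set (\<beta> # Z)))" using i(2) unfolding e1 e2 by blast
        then show ?thesis using mp[OF conjunct1[OF IH] disjI2] it by simp
      qed
    qed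
  next
    assume H: "JS = set (\<beta> # bs) \<union> set Z"
    then have "c' = c" using c'(5) by simp
    moreover have "JS = set bs \<union> set (\<beta> # Z)" using H by auto
    ultimately show "iter_res (\<beta> # bs) Z \<psi> 0 = c" using IH it by simp
  qed
qed



lemma nbc_nspan:
  fixes D :: "('k::field^'n) list"
  assumes dD: "distinct D" and I: "I \<in> basesB D" and j: "j < length D" "j \<notin> I"
  shows "D ! j \<notin> vec.span ((!) D ` {i\<in>I. j < i})"
proof -
  have Ib: "I \<subseteq> {..<length D}" using I unfolding basesB_def by blast
  have ind: "vec.independent (insert (D ! j) ((!) D ` {i\<in>I. j < i}))"
    using I j unfolding basesB_def by blast
  have "D ! j \<notin> (!) D ` {i\<in>I. j < i}"
  proof
    assume "D ! j \<in> (!) D ` {i\<in>I. j < i}"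
    then obtain i where i: "i \<in> I" "D ! j = D ! i" by blast
    then have "i < length D" using Ib by blast
    then have "i = j" using i(2) j(1) dD nth_eq_iff_index_eq by metis
    then show False using i(1) j(2) by simp
  qed
  then show ?thesis using ind vec.independent_insert[of "D ! j" "(!) D ` {i\<in>I. j < i}"] by presburger
qed

lemma comb:
  fixes D :: "('k::field^'n) list" and \<iota> :: "nat \<Rightarrow> nat"
  assumes dD: "distinct D" and I: "I \<in> basesB D" and J: "J \<in> basesB D"
    and dec: "\<And>i i'. i < i' \<Longrightarrow> i' < r \<Longrightarrow> \<iota> i' < \<iota> i"
    and Ii: "I = \<iota> ` {0..<r}"
    and cond: "\<forall>m<r. \<exists>j\<in>J. D ! j \<in> vec.span ((\<lambda>i. D ! \<iota> i) ` {0..<Suc m}) \<and>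
                            D ! j \<notin> vec.span ((\<lambda>i. D ! \<iota> i) ` {0..<m})"
  shows "I = J"
proof -
  define b where "b i = D ! \<iota> i" for i
  define G where "G m = vec.span (b ` {0..<m})" for m
  have Ib: "I \<subseteq> {..<length D}" and Jb: "J \<subseteq> {..<length D}" using I J unfolding basesB_def by blast+
  have indI: "vec.independent ((!) D ` I)" and spI: "vec.span ((!) D ` I) = UNIV"
    using I unfolding basesB_def by blast+
  have indJ: "vec.independent ((!) D ` J)" using J unfolding basesB_def by blast
  have bI: "b ` {0..<r} = (!) D ` I" unfolding b_def Ii by auto
  have injD: "inj_on ((!) D) {..<length D}" using inj_on_nth[OF dD] by simp
  have iota_lt: "\<iota> m < length D" if "m < r" for m
  proof -
    have "\<iota> m \<in> I" using Ii that by simp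
    then show ?thesis using Ib by blast
  qed
  have b_inj: "b m = b m' \<Longrightarrow> m < r \<Longrightarrow> m' < r \<Longrightarrow> m = m'" for m m'
  proof -
    assume h: "b m = b m'" "m < r" "m' < r"
    then have "\<iota> m = \<iota> m'" using injD iota_lt unfolding b_def inj_on_def by blast
    then show "m = m'" using dec h(2,3) by (metis linorder_neqE_nat less_irrefl)
  qed
  have Gmono: "G m \<subseteq> G m'" if "m \<le> m'" for m m'
    unfolding G_def using that by (intro vec.span_mono image_mono) auto
  have bnG: "b m \<notin> G m" if "m < r" for m
  proof
    assume "b m \<in> G m"
    moreover have "b ` {0..<m} \<subseteq> b ` {0..<r} - {b m}"
    proof
      fix y assume "y \<in> b ` {0..<m}"
      then obtain i where i: "i < m" "y = b i" by auto
      have "i < r" using i(1) that by simp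
      then have "b i \<noteq> b m" using b_inj[of i m] i(1) that by auto
      then show "y \<in> b ` {0..<r} - {b m}" using i \<open>i < r\<close> by auto
    qed
    ultimately have "b m \<in> vec.span (b ` {0..<r} - {b m})" unfolding G_def using vec.span_mono by blast
    moreover have "b m \<in> b ` {0..<r}" using that by simp
    ultimately have "vec.dependent (b ` {0..<r})" unfolding vec.dependent_def by (rule bexI)
    then show False using indI bI by simp
  qed
  have bG: "b m \<in> G (Suc m)" for m unfolding G_def by (rule vec.span_base) simp
  have level_unique: "m = m'" if "x \<in> G (Suc m)" "x \<notin> G m" "x \<in> G (Suc m')" "x \<notin> G m'" for x m m'
  proof (rule ccontr)
    assume "m \<noteq> m'"
    then consider "Suc m \<le> m'" | "Suc m' \<le> m" by linarith
    then show False
    proof cases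
      case 1 then show False using Gmono[OF 1] that by blast
    next
      case 2 then show False using Gmono[OF 2] that by blast
    qed
  qed
  have C1: "\<iota> m \<le> j" if "j \<in> J" "m < r" "D ! j \<in> G (Suc m)" "D ! j \<notin> G m" for j m
  proof (cases "j \<in> I")
    case True
    then obtain m' where m': "m' < r" "j = \<iota> m'" using Ii by auto
    then have "D ! j = b m'" unfolding b_def by simp
    then have "m' = m" using level_unique[of "D ! j" m' m] bG[of m'] bnG[OF m'(1)] that(3,4) by simp
    then show ?thesis using m' by simp
  next
    case False
    have jD: "j < length D" using Jb that(1) by blast
    show ?thesis
    proof (rule ccontr)
      assume "\<not> \<iota> m \<le> j"
      then have lt: "j < \<iota> m" by simp
      have "b ` {0..<Suc m} \<subseteq> (!) D ` {i\<in>I. j < i}"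
      proof
        fix y assume "y \<in> b ` {0..<Suc m}"
        then obtain i where i: "i \<le> m" "y = b i" by (auto simp: less_Suc_eq_le)
        have "\<iota> m \<le> \<iota> i" using dec[of i m] i(1) that(2) by (cases "i = m") auto
        then have "j < \<iota> i" using lt by simp
        moreover have "\<iota> i \<in> I" using Ii i(1) that(2) by auto
        ultimately show "y \<in> (!) D ` {i\<in>I. j < i}" using i(2) unfolding b_def by blast
      qed
      then have "G (Suc m) \<subseteq> vec.span ((!) D ` {i\<in>I. j < i})" unfolding G_def by (rule vec.span_mono)
      then have "D ! j \<in> vec.span ((!) D ` {i\<in>I. j < i})" using that(3) by blast
      then show False using nbc_nspan[OF dD I jD False] by contradiction
    qed
  qed
  have "\<forall>m<r. \<exists>j. j \<in> J \<and> D ! j \<in> G (Suc m) \<and> D ! j \<notin> G m"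
    using cond unfolding G_def b_def by blast
  then obtain j' where j': "\<And>m. m < r \<Longrightarrow> j' m \<in> J \<and> D ! j' m \<in> G (Suc m) \<and> D ! j' m \<notin> G m"
    by metis
  have C6: "m \<le> r \<Longrightarrow> G m \<subseteq> vec.span ((\<lambda>p. D ! j' p) ` {0..<m})" for m
  proof (induction m)
    case 0
    then show ?case unfolding G_def by simp
  next
    case (Suc m)
    let ?T = "vec.span ((\<lambda>p. D ! j' p) ` {0..<Suc m})"
    have sub1: "vec.span ((\<lambda>p. D ! j' p) ` {0..<m}) \<subseteq> ?T"
      by (intro vec.span_mono image_mono) auto
    have GmT: "b ` {0..<m} \<subseteq> ?T"
      using Suc.IH Suc.prems sub1 vec.span_superset[of "b ` {0..<m}"] unfolding G_def by auto
    have mr: "m < r" using Suc.prems by simp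
    have jm: "D ! j' m \<in> vec.span (insert (b m) (b ` {0..<m}))" "D ! j' m \<notin> vec.span (b ` {0..<m})"
      using j'[OF mr] unfolding G_def by (simp_all add: atLeast0_lessThan_Suc)
    have "b m \<in> vec.span (insert (D ! j' m) (b ` {0..<m}))" using vec.in_span_insert[OF jm] .
    moreover have "insert (D ! j' m) (b ` {0..<m}) \<subseteq> ?T"
      using GmT vec.span_base[of "D ! j' m" "(\<lambda>p. D ! j' p) ` {0..<Suc m}"] by auto
    ultimately have "b m \<in> ?T" using vec.span_minimal[OF _ vec.subspace_span] by blast
    then have "insert (b m) (b ` {0..<m}) \<subseteq> ?T" using GmT by simp
    then show ?case unfolding G_def atLeast0_lessThan_Suc image_insert
      by (rule vec.span_minimal[OF _ vec.subspace_span])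
  qed
  have C7: "\<iota> m \<in> J" if mr: "m < r" for m
  proof (rule ccontr)
    assume nJ: "\<iota> m \<notin> J"
    have nsp: "D ! \<iota> m \<notin> vec.span ((!) D ` {j\<in>J. \<iota> m < j})"
      using nbc_nspan[OF dD J iota_lt[OF mr] nJ] .
    have "(\<lambda>p. D ! j' p) ` {0..<Suc m} \<subseteq> (!) D ` {j\<in>J. \<iota> m < j}"
    proof
      fix y assume "y \<in> (\<lambda>p. D ! j' p) ` {0..<Suc m}"
      then obtain p where p: "p \<le> m" "y = D ! j' p" by (auto simp: less_Suc_eq_le)
      have pr: "p < r" using p(1) mr by simp
      have jp: "j' p \<in> J" "D ! j' p \<in> G (Suc p)" "D ! j' p \<notin> G p" using j'[OF pr] by auto
      have "\<iota> p \<le> j' p" using C1[OF jp(1) pr jp(2) jp(3)] .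
      moreover have "\<iota> m \<le> \<iota> p" using dec[of p m] p(1) mr by (cases "p = m") auto
      moreover have "j' p \<noteq> \<iota> m" using jp(1) nJ by auto
      ultimately have "\<iota> m < j' p" by simp
      then show "y \<in> (!) D ` {j\<in>J. \<iota> m < j}" using p(2) jp(1) by blast
    qed
    then have "vec.span ((\<lambda>p. D ! j' p) ` {0..<Suc m}) \<subseteq> vec.span ((!) D ` {j\<in>J. \<iota> m < j})"
      by (rule vec.span_mono)
    moreover have "G (Suc m) \<subseteq> vec.span ((\<lambda>p. D ! j' p) ` {0..<Suc m})" using C6[of "Suc m"] mr by simp
    moreover have "D ! \<iota> m \<in> G (Suc m)" using bG[of m] unfolding b_def .
    ultimately show False using nsp by blast
  qed
  have IJ: "I \<subseteq> J" using C7 Ii by auto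
  have JI: "J \<subseteq> I"
  proof
    fix j assume jJ: "j \<in> J"
    show "j \<in> I"
    proof (rule ccontr)
      assume jI: "j \<notin> I"
      have "(!) D ` I \<subseteq> (!) D ` J - {D ! j}"
      proof
        fix y assume "y \<in> (!) D ` I"
        then obtain i where i: "i \<in> I" "y = D ! i" by blast
        have "i \<noteq> j" using i(1) jI by blast
        moreover have "i < length D" "j < length D" using i(1) jJ Ib Jb by auto
        ultimately have "D ! i \<noteq> D ! j" using dD nth_eq_iff_index_eq by metis
        moreover have "i \<in> J" using i(1) IJ by blast
        ultimately show "y \<in> (!) D ` J - {D ! j}" using i(2) by simp
      qed
      then have "vec.span ((!) D ` I) \<subseteq> vec.span ((!) D ` J - {D ! j})" by (rule vec.span_mono)
      then have "D ! j \<in> vec.span ((!) D ` J - {D ! j})" using spI by blast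
      moreover have "D ! j \<in> (!) D ` J" using jJ by blast
      ultimately have "vec.dependent ((!) D ` J)" unfolding vec.dependent_def by (rule bexI)
      then show False using indJ by contradiction
    qed
  qed
  show ?thesis using IJ JI by blast
qed



theorem mainTheorem10:
  fixes D :: "('k::field_char_0 ^ 'n) list"
  assumes "distinct D" and "0 \<notin> set D" and "vec.span (set D) = UNIV"
    and "I \<in> basesB D" and "J \<in> basesB D"
  shows "res_form D I (phi_idx D J) = (if I = J then 1 else 0)"
proof -
  note dD = assms(1) and I = assms(4) and J = assms(5)
  define s where "s = sorted_list_of_set I"
  define r where "r = length s"
  define bs where "bs = rev (map ((!) D) s)"
  define \<iota> where "\<iota> i = s ! (r - 1 - i)" for i
  define JS where "JS = (!) D ` J"
  have Ib: "I \<subseteq> {..<length D}" and Jb: "J \<subseteq> {..<length D}" using I J unfolding basesB_def by blast+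
  have finI: "finite I" by (rule finite_subset[OF Ib]) simp
  have finJ: "finite J" by (rule finite_subset[OF Jb]) simp
  have sI: "set s = I" unfolding s_def using finI by simp
  have ds: "distinct s" unfolding s_def by simp
  have ss: "sorted_wrt (<) s" unfolding s_def by (rule strict_sorted_list_of_set)
  have injD: "inj_on ((!) D) {..<length D}" using inj_on_nth[OF dD] by simp
  have injI: "inj_on ((!) D) I" using inj_on_subset[OF injD Ib] .
  have injJ: "inj_on ((!) D) J" using inj_on_subset[OF injD Jb] .
  have lbs: "length bs = r" unfolding bs_def r_def by simp
  have bsn: "bs ! i = D ! \<iota> i" if "i < r" for i
    using that unfolding bs_def \<iota>_def r_def by (simp add: rev_nth)
  have takeb: "set (take m bs) = (\<lambda>i. D ! \<iota> i) ` {0..<m}" if "m \<le> r" for m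
  proof -
    have "set (take m bs) = (!) bs ` {0..<m}" using nth_image[of m bs] that lbs by simp
    also have "\<dots> = (\<lambda>i. D ! \<iota> i) ` {0..<m}" using bsn that by (intro image_cong) auto
    finally show ?thesis .
  qed
  have dec: "\<iota> i' < \<iota> i" if "i < i'" "i' < r" for i i'
    unfolding \<iota>_def using sorted_wrt_nth_less[OF ss, of "r - 1 - i'" "r - 1 - i"] that r_def by simp
  have Ii: "I = \<iota> ` {0..<r}"
  proof
    show "I \<subseteq> \<iota> ` {0..<r}"
    proof
      fix x assume "x \<in> I"
      then have "x \<in> set s" using sI by simp
      then obtain p where p: "p < r" "x = s ! p" unfolding r_def in_set_conv_nth by auto
      have e: "x = \<iota> (r - 1 - p)" unfolding \<iota>_def using p by simp
      have mem: "r - 1 - p \<in> {0..<r}" using p by simp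
      show "x \<in> \<iota> ` {0..<r}" by (rule rev_image_eqI[of "r - 1 - p" _ x \<iota>, OF mem e])
    qed
  next
    show "\<iota> ` {0..<r} \<subseteq> I"
    proof
      fix x assume "x \<in> \<iota> ` {0..<r}"
      then obtain i where i: "i < r" "x = \<iota> i" by auto
      have "r - 1 - i < length s" using i(1) r_def by simp
      then have "s ! (r - 1 - i) \<in> set s" by (rule nth_mem)
      then show "x \<in> I" using i(2) sI unfolding \<iota>_def by simp
    qed
  qed
  have setbs: "set bs = (!) D ` I" unfolding bs_def using sI by simp
  have dbs: "distinct (bs @ [])" unfolding bs_def using ds injI sI by (simp add: distinct_map)
  have indI: "vec.independent (set (bs @ []))" and spI: "vec.span (set (bs @ [])) = UNIV"
    using I setbs unfolding basesB_def by auto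
  have finJS: "finite JS" unfolding JS_def using finJ by simp
  have JS0: "0 \<notin> JS"
  proof
    assume "0 \<in> JS"
    then obtain j where "j \<in> J" "D ! j = 0" unfolding JS_def by auto
    then have "j < length D" using Jb by auto
    then have "D ! j \<in> set D" by (rule nth_mem)
    then have "0 \<in> set D" using \<open>D ! j = 0\<close> by simp
    then show False using assms(2) by simp
  qed
  have KS0: "KS JS [] = JS" unfolding KS_def using JS0 by auto
  have sh: "shape JS [] (phi_idx D J) 1"
    unfolding shape_def KS0
  proof (intro allI impI)
    fix x
    have "(\<Prod>i\<in>J. pair (D ! i) x) = (\<Prod>k\<in>JS. pair k x)"
      unfolding JS_def using prod.reindex[OF injJ, of "\<lambda>k. pair k x"] by simp
    then show "phi_idx D J x = 1 / (\<Prod>k\<in>JS. pair k x)" unfolding phi_idx_def by simp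
  qed
  have "vec.independent JS" unfolding JS_def using J unfolding basesB_def by blast
  then have iv: "invar JS [] 1" unfolding invar_def KS0 by simp
  note M = main_ind[OF finJS dbs indI spI sh iv]
  have rf: "res_form D I (phi_idx D J) = iter_res bs [] (phi_idx D J) 0"
    unfolding res_form_def bs_def s_def ..
  show ?thesis
  proof (cases "I = J")
    case True
    have "JS = set bs \<union> set []" unfolding JS_def setbs True by simp
    then show ?thesis using M rf True by simp
  next
    case False
    have "\<not> (\<forall>m<r. \<exists>j\<in>J. D ! j \<in> vec.span ((\<lambda>i. D ! \<iota> i) ` {0..<Suc m}) \<and>
                            D ! j \<notin> vec.span ((\<lambda>i. D ! \<iota> i) ` {0..<m}))"
    proof
      assume "\<forall>m<r. \<exists>j\<in>J. D ! j \<in> vec.span ((\<lambda>i. D ! \<iota> i) ` {0..<Suc m}) \<and>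
                            D ! j \<notin> vec.span ((\<lambda>i. D ! \<iota> i) ` {0..<m})"
      then have "I = J" using comb[OF dD I J dec Ii] by blast
      then show False using False by contradiction
    qed
    then obtain m where m: "m < r" "\<not> (\<exists>j\<in>J. D ! j \<in> vec.span ((\<lambda>i. D ! \<iota> i) ` {0..<Suc m}) \<and>
                            D ! j \<notin> vec.span ((\<lambda>i. D ! \<iota> i) ` {0..<m}))" by blast
    have t1: "set (take (Suc m) bs) \<union> set [] = (\<lambda>i. D ! \<iota> i) ` {0..<Suc m}" using takeb m(1) by simp
    have t2: "set (take m bs) \<union> set [] = (\<lambda>i. D ! \<iota> i) ` {0..<m}" using takeb m(1) by simp
    have "\<exists>i<length bs. \<not>(\<exists>k\<in>JS. k \<in> vec.span (set (take (Suc i) bs) \<union> set []) \<and>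
         k \<notin> vec.span (set (take i bs) \<union> set []))"
    proof (intro exI conjI)
      show "m < length bs" using m(1) lbs by simp
      show "\<not>(\<exists>k\<in>JS. k \<in> vec.span (set (take (Suc m) bs) \<union> set []) \<and>
         k \<notin> vec.span (set (take m bs) \<union> set []))"
      proof
        assume "\<exists>k\<in>JS. k \<in> vec.span (set (take (Suc m) bs) \<union> set []) \<and>
         k \<notin> vec.span (set (take m bs) \<union> set [])"
        then obtain k where k: "k \<in> JS" "k \<in> vec.span ((\<lambda>i. D ! \<iota> i) ` {0..<Suc m})"
           "k \<notin> vec.span ((\<lambda>i. D ! \<iota> i) ` {0..<m})" unfolding t1 t2 by blast
        then obtain j where "j \<in> J" "k = D ! j" unfolding JS_def by blast
        then show False using m(2) k by blast
      qed
    qed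
    then show ?thesis using M rf False by simp
  qed
qed


end
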